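(* Let $g>0$, let $\bar\rho=\bar\rho(x_3)\in L^\infty(\mathbb{R})$ satisfy $\bar\rho'\in C_0^\infty(\mathbb{R})$, $\inf_{\mathbb{R}}\bar\rho>0$ and $\bar\rho'(x_3^0)>0$ for some $x_3^0$, and let $M_{\mathrm c}$, $\mathcal M_{\mathrm{vc}}$, $\mathbb{A}^{\mathrm g}$ and $E_0$ be as in the context. Let $\xi\in\mathbb{R}^2$, $\xi\neq\mathbf 0$. If $\xi\in\mathbb{A}^{\mathrm g}$, then there exists $\psi_0$, with $\psi_0\in H^1(\mathbb{R})$ in the horizontal case and $\psi_0\in\mathcal M_{\mathrm{vc}}$ in the vertical case, such that $E_0(\psi_0)<0$. If $\xi\notin\mathbb{A}^{\mathrm g}$, then $|\xi|^2E_0(\psi)\ge0$ for every $\psi\in H^1(\mathbb{R})$ in the horizontal case, and for every $\psi\in H^2(\mathbb{R})$ in the vertical case.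
   Context: All functions $\psi$ are real-valued functions of $x_3\in\mathbb{R}$, $'=d/dx_3$, $\xi=(\xi_1,\xi_2)$. $M_{\mathrm c}:=\sqrt{\sup_{\psi\in H^1(\mathbb{R}),\psi\not\equiv0}\int_{\mathbb{R}}g\bar\rho'\psi^2dx_3/\int_{\mathbb{R}}|\psi'|^2dx_3}\in(0,\infty]$. Horizontal case ($M\neq0$ constant): for $0<|M\xi_1|/|\xi|<M_{\mathrm c}$, $S(\xi):=\sqrt{\sup_{\psi\in H^1,\psi\not\equiv0}\big(g|\xi|^2\int\bar\rho'\psi^2/(M\xi_1)^2-\int|\psi'|^2\big)/\int|\psi|^2}$; $\mathbb{A}^{\mathrm g}:=\big(\{\xi: |\xi_1M|/|\xi|\in(0,M_{\mathrm c}),\ |\xi|<S(\xi)\}\cup\{\xi_1=0\}\big)\setminus\{\mathbf 0\}$; and $E_0(\psi):=\int_{\mathbb{R}}\big[M^2\xi_1^2(|\psi|^2+|\psi'|^2/|\xi|^2)-g\bar\rho'\psi^2\big]dx_3$. Vertical case ($M$ constant with $|M|\in(0,M_{\mathrm c})$): $\mathcal M_{\mathrm{vc}}:=\{\psi\in H^2(\mathbb{R}):\int(g\bar\rho'\psi^2-M^2|\psi'|^2)dx_3>0\}$, $|\xi|^M_{\mathrm{vc}}:=\sqrt{\inf_{\psi\in\mathcal M_{\mathrm{vc}}}M^2\int|\psi''|^2/\int(g\bar\rho'\psi^2-M^2|\psi'|^2)}$, $\mathbb{A}^{\mathrm g}:=\{\xi:|\xi|^M_{\mathrm{vc}}<|\xi|\}$,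 and $E_0(\psi):=\int_{\mathbb{R}}\big[M^2(|\psi'|^2+|\psi''|^2/|\xi|^2)-g\bar\rho'\psi^2\big]dx_3$. *)

theory Defs
  imports "HOL-Analysis.Analysis"
begin

text \<open>A function psi : R -> R is in H^1(R) with (weak) derivative dpsi iff psi and dpsi are
square integrable and psi is the indefinite integral of dpsi (i.e. psi is the locally
absolutely continuous representative).\<close>

definition H1 :: "(real \<Rightarrow> real) \<Rightarrow> (real \<Rightarrow> real) \<Rightarrow> bool" where
  "H1 psi dpsi \<longleftrightarrow>
     psi \<in> borel_measurable lborel \<and> dpsi \<in> borel_measurable lborel \<and>
     integrable lborel (\<lambda>x. (psi x)\<^sup>2) \<and> integrable lborel (\<lambda>x. (dpsi x)\<^sup>2) \<and>
     (\<forall>a b. a \<le> b \<longrightarrow> set_integrable lborel {a..b} dpsi \<and>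
        psi b - psi a = (LINT t:{a..b}|lborel. dpsi t))"

definition H2 :: "(real \<Rightarrow> real) \<Rightarrow> (real \<Rightarrow> real) \<Rightarrow> (real \<Rightarrow> real) \<Rightarrow> bool" where
  "H2 psi dpsi ddpsi \<longleftrightarrow> H1 psi dpsi \<and> H1 dpsi ddpsi"

definition smooth_fun :: "(real \<Rightarrow> real) \<Rightarrow> bool" where
  "smooth_fun f \<longleftrightarrow> (\<forall>k x. ((deriv ^^ k) f) differentiable (at x))"

definition Mc_sq :: "real \<Rightarrow> (real \<Rightarrow> real) \<Rightarrow> ereal" where
  "Mc_sq g drho = (SUP p \<in> {(psi, dpsi). H1 psi dpsi \<and> psi \<noteq> (\<lambda>_. 0)}.
      ereal ((LINT x|lborel. g * drho x * (fst p x)\<^sup>2) / (LINT x|lborel. (snd p x)\<^sup>2)))"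

definition Mc :: "real \<Rightarrow> (real \<Rightarrow> real) \<Rightarrow> ereal" where
  "Mc g drho = (if Mc_sq g drho = \<infinity> then \<infinity> else ereal (sqrt (real_of_ereal (Mc_sq g drho))))"

definition S_hor :: "real \<Rightarrow> (real \<Rightarrow> real) \<Rightarrow> real \<Rightarrow> real \<times> real \<Rightarrow> real" where
  "S_hor g drho M xi = sqrt (Sup ((\<lambda>(psi, dpsi).
      (g * (norm xi)\<^sup>2 * (LINT x|lborel. drho x * (psi x)\<^sup>2) / (M * fst xi)\<^sup>2
        - (LINT x|lborel. (dpsi x)\<^sup>2)) / (LINT x|lborel. (psi x)\<^sup>2))
      ` {(psi, dpsi). H1 psi dpsi \<and> psi \<noteq> (\<lambda>_. 0)}))"

definition Ag_hor :: "real \<Rightarrow> (real \<Rightarrow> real) \<Rightarrow> real \<Rightarrow> (real \<times> real) set" where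
  "Ag_hor g drho M = ({xi. 0 < \<bar>M * fst xi\<bar> / norm xi \<and>
                          ereal (\<bar>M * fst xi\<bar> / norm xi) < Mc g drho \<and>
                          norm xi < S_hor g drho M xi}
                     \<union> {xi. fst xi = 0}) - {0}"

definition E0_hor :: "real \<Rightarrow> (real \<Rightarrow> real) \<Rightarrow> real \<Rightarrow> real \<times> real
                       \<Rightarrow> (real \<Rightarrow> real) \<Rightarrow> (real \<Rightarrow> real) \<Rightarrow> real" where
  "E0_hor g drho M xi psi dpsi = (LINT x|lborel.
      M\<^sup>2 * (fst xi)\<^sup>2 * ((psi x)\<^sup>2 + (dpsi x)\<^sup>2 / (norm xi)\<^sup>2) - g * drho x * (psi x)\<^sup>2)"

definition Mvc :: "real \<Rightarrow> (real \<Rightarrow> real) \<Rightarrow> real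
                    \<Rightarrow> ((real \<Rightarrow> real) \<times> (real \<Rightarrow> real) \<times> (real \<Rightarrow> real)) set" where
  "Mvc g drho M = {(psi, dpsi, ddpsi). H2 psi dpsi ddpsi \<and>
      (LINT x|lborel. g * drho x * (psi x)\<^sup>2 - M\<^sup>2 * (dpsi x)\<^sup>2) > 0}"

definition xi_vc :: "real \<Rightarrow> (real \<Rightarrow> real) \<Rightarrow> real \<Rightarrow> real" where
  "xi_vc g drho M = sqrt (Inf ((\<lambda>(psi, dpsi, ddpsi).
      M\<^sup>2 * (LINT x|lborel. (ddpsi x)\<^sup>2) /
        (LINT x|lborel. g * drho x * (psi x)\<^sup>2 - M\<^sup>2 * (dpsi x)\<^sup>2)) ` Mvc g drho M))"

definition Ag_ver :: "real \<Rightarrow> (real \<Rightarrow> real) \<Rightarrow> real \<Rightarrow> (real \<times> real) set" where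
  "Ag_ver g drho M = {xi. xi_vc g drho M < norm xi}"

definition E0_ver :: "real \<Rightarrow> (real \<Rightarrow> real) \<Rightarrow> real \<Rightarrow> real \<times> real
                       \<Rightarrow> (real \<Rightarrow> real) \<Rightarrow> (real \<Rightarrow> real) \<Rightarrow> (real \<Rightarrow> real) \<Rightarrow> real" where
  "E0_ver g drho M xi psi dpsi ddpsi = (LINT x|lborel.
      M\<^sup>2 * ((dpsi x)\<^sup>2 + (ddpsi x)\<^sup>2 / (norm xi)\<^sup>2) - g * drho x * (psi x)\<^sup>2)"

end

theory Submission
  imports Defs
begin


lemma absq: "\<bar>y\<bar> \<le> y\<^sup>2 + (1::real)"
proof -
  have "0 \<le> (\<bar>y\<bar> - 1)\<^sup>2" by simp
  hence "0 \<le> \<bar>y\<bar>\<^sup>2 - 2*\<bar>y\<bar> + 1" by (simp add: power2_eq_square algebra_simps)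
  thus ?thesis by simp
qed

lemma sq_loc_int:
  fixes f :: "real \<Rightarrow> real"
  assumes fm: "f \<in> borel_measurable lborel" and fi: "integrable lborel (\<lambda>x. (f x)\<^sup>2)"
  shows "set_integrable lborel {a..b} f"
  unfolding set_integrable_def
  apply (rule Bochner_Integration.integrable_bound[where f="\<lambda>x. (f x)\<^sup>2 + indicator {a..b} x"])
proof -
  show "integrable lborel (\<lambda>x. (f x)\<^sup>2 + indicator {a..b} x)"
    proof (intro Bochner_Integration.integrable_add integrable_real_indicator)
    show "emeasure lborel {a..b} < \<infinity>" by (cases "a \<le> b") auto
  qed (use fi in simp_all)
  show "(\<lambda>x. indicator {a..b} x *\<^sub>R f x) \<in> borel_measurable lborel" using fm by measurable
  show "AE x in lborel. norm (indicator {a..b} x *\<^sub>R f x) \<le> norm ((f x)\<^sup>2 + indicator {a..b} x)"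
    using absq by (auto simp: indicator_def)
qed

lemma jensen_int:
  fixes f :: "real \<Rightarrow> real"
  assumes i1: "set_integrable lborel {x..x+h} f" and i2: "set_integrable lborel {x..x+h} (\<lambda>t. (f t)\<^sup>2)"
    and h: "h > 0"
  shows "(LINT t:{x..x+h}|lborel. f t)\<^sup>2 \<le> h * (LINT t:{x..x+h}|lborel. (f t)\<^sup>2)"
proof -
  define I where "I = (LINT t:{x..x+h}|lborel. f t)"
  define J where "J = (LINT t:{x..x+h}|lborel. (f t)\<^sup>2)"
  define l where "l = I / h"
  let ?ind = "indicator {x..x+h} :: real \<Rightarrow> real"
  have a1: "integrable lborel (\<lambda>t. ?ind t * f t)" using i1 by (simp add: set_integrable_def)
  have a2: "integrable lborel (\<lambda>t. ?ind t * (f t)\<^sup>2)" using i2 by (simp add: set_integrable_def)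
  have a3: "integrable lborel ?ind" using h by (intro integrable_real_indicator) auto
  have I: "I = (\<integral>t. ?ind t * f t \<partial>lborel)" by (simp add: I_def set_lebesgue_integral_def)
  have J: "J = (\<integral>t. ?ind t * (f t)\<^sup>2 \<partial>lborel)" by (simp add: J_def set_lebesgue_integral_def)
  have m: "(\<integral>t. ?ind t \<partial>lborel) = h" using h by simp
  have eq: "(\<lambda>t. ?ind t * (f t - l)\<^sup>2) = (\<lambda>t. ?ind t * (f t)\<^sup>2 - (2 * l) * (?ind t * f t) + l\<^sup>2 * ?ind t)"
    by (auto simp: power2_eq_square algebra_simps)
  have "0 \<le> (\<integral>t. ?ind t * (f t - l)\<^sup>2 \<partial>lborel)"
    by (rule integral_nonneg_AE) auto
  also have "\<dots> = J - 2 * l * I + l\<^sup>2 * (\<integral>t. ?ind t \<partial>lborel)"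
    unfolding eq I J using a1 a2 a3
    by (simp add: Bochner_Integration.integral_add Bochner_Integration.integral_diff
      Bochner_Integration.integrable_add Bochner_Integration.integrable_diff)
  also have "\<dots> = J - 2 * l * I + l\<^sup>2 * h" using m by simp
  finally have "0 \<le> J - 2 * l * I + l\<^sup>2 * h" .
  hence "0 \<le> h * J - I\<^sup>2" using h unfolding l_def by (simp add: field_simps power2_eq_square)
  thus ?thesis unfolding I_def J_def by simp
qed


definition avg :: "real \<Rightarrow> (real \<Rightarrow> real) \<Rightarrow> real \<Rightarrow> real" where
  "avg h f x = (LINT t:{x..x+h}|lborel. f t) / h"

lemma ind_pair_meas:
  fixes f :: "real \<Rightarrow> real"
  assumes fm[measurable]: "f \<in> borel_measurable borel"
  shows "(\<lambda>(x, t). indicator {x..x+h} t *\<^sub>R f t) \<in> borel_measurable (lborel \<Otimes>\<^sub>M lborel)"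
proof -
  have "(\<lambda>(x, t). indicator {x..x+h} t *\<^sub>R f t) = (\<lambda>p::real\<times>real. if fst p \<le> snd p \<and> snd p \<le> fst p + h then f (snd p) else 0)"
    by (auto simp: indicator_def)
  also have "\<dots> \<in> borel_measurable (lborel \<Otimes>\<^sub>M lborel)"
    by measurable
  finally show ?thesis .
qed

lemma avg_meas:
  fixes f :: "real \<Rightarrow> real"
  assumes fm: "f \<in> borel_measurable borel"
  shows "avg h f \<in> borel_measurable borel"
proof -
  have "(\<lambda>x. LINT t|lborel. indicator {x..x+h} t *\<^sub>R f t) \<in> borel_measurable lborel"
    apply (rule lborel.borel_measurable_lebesgue_integral)
    using ind_pair_meas[OF fm, of h] by simp
  then show ?thesis
    unfolding avg_def set_lebesgue_integral_def by simp
qed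


lemma avg_L2:
  fixes f :: "real \<Rightarrow> real"
  assumes fm[measurable]: "f \<in> borel_measurable borel" and fi: "integrable lborel (\<lambda>x. (f x)\<^sup>2)" and h: "h > 0"
  shows "integrable lborel (\<lambda>x. (avg h f x)\<^sup>2) \<and> (LINT x|lborel. (avg h f x)\<^sup>2) \<le> (LINT x|lborel. (f x)\<^sup>2)"
proof -
  have fml: "f \<in> borel_measurable lborel" by simp
  have li: "set_integrable lborel {a..b} f" for a b using sq_loc_int[OF fml fi] .
  have li2: "set_integrable lborel A (\<lambda>t. (f t)\<^sup>2)" if "A \<in> sets borel" for A
    unfolding set_integrable_def using fi that by (intro integrable_mult_indicator) auto
  define Q where "Q x = (LINT t:{x..x+h}|lborel. (f t)\<^sup>2) / h" for x
  have pw: "(avg h f x)\<^sup>2 \<le> Q x" for x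
  proof -
    have "(LINT t:{x..x+h}|lborel. f t)\<^sup>2 \<le> h * (LINT t:{x..x+h}|lborel. (f t)\<^sup>2)"
      using jensen_int[OF li li2 h] by simp
    then have "(LINT t:{x..x+h}|lborel. f t)\<^sup>2 / h\<^sup>2 \<le> h * (LINT t:{x..x+h}|lborel. (f t)\<^sup>2) / h\<^sup>2"
      using h by (intro divide_right_mono) auto
    then show ?thesis unfolding avg_def Q_def using h by (simp add: power_divide power2_eq_square)
  qed
  define F where "F = (\<integral>\<^sup>+x. ennreal ((f x)\<^sup>2) \<partial>lborel)"
  have F: "F = ennreal (LINT x|lborel. (f x)\<^sup>2)"
    unfolding F_def using fi by (intro nn_integral_eq_integral) auto
  define G where "G x s = ennreal (indicator {0..h} s * (f (x+s))\<^sup>2)" for x s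
  have Gm: "case_prod G \<in> borel_measurable (lborel \<Otimes>\<^sub>M lborel)"
    unfolding G_def by measurable
  have Qx: "ennreal (Q x) = ennreal (1/h) * (\<integral>\<^sup>+s. G x s \<partial>lborel)" for x
  proof -
    have "ennreal (LINT t:{x..x+h}|lborel. (f t)\<^sup>2) = (\<integral>\<^sup>+t. ennreal (indicator {x..x+h} t * (f t)\<^sup>2) \<partial>lborel)"
    proof -
      have ii: "integrable lborel (\<lambda>t. indicator {x..x+h} t * (f t)\<^sup>2)"
        using li2[of "{x..x+h}"] by (simp add: set_integrable_def)
      show ?thesis unfolding set_lebesgue_integral_def real_scaleR_def
        using ii by (subst nn_integral_eq_integral) auto
    qed
    also have "\<dots> = (\<integral>\<^sup>+s. ennreal (indicator {x..x+h} (x + 1 * s) * (f (x + 1 * s))\<^sup>2) \<partial>lborel)"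
      using nn_integral_real_affine[of "\<lambda>t. ennreal (indicator {x..x+h} t * (f t)\<^sup>2)" 1 x] by simp
    also have "\<dots> = (\<integral>\<^sup>+s. G x s \<partial>lborel)"
      unfolding G_def by (intro nn_integral_cong) (auto simp: indicator_def)
    finally show ?thesis unfolding Q_def using h
      by (simp add: ennreal_mult' divide_inverse mult.commute)
  qed
  have Gs: "(\<integral>\<^sup>+x. G x s \<partial>lborel) = ennreal (indicator {0..h} s) * F" for s
  proof -
    have "(\<integral>\<^sup>+x. G x s \<partial>lborel) = (\<integral>\<^sup>+x. ennreal (indicator {0..h} s) * ennreal ((f (s + 1 * x))\<^sup>2) \<partial>lborel)"
      unfolding G_def by (intro nn_integral_cong) (simp add: ennreal_mult' add.commute)
    also have "\<dots> = ennreal (indicator {0..h} s) * (\<integral>\<^sup>+x. ennreal ((f (s + 1 * x))\<^sup>2) \<partial>lborel)"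
      by (rule nn_integral_cmult) auto
    also have "(\<integral>\<^sup>+x. ennreal ((f (s + 1 * x))\<^sup>2) \<partial>lborel) = F"
      unfolding F_def using nn_integral_real_affine[of "\<lambda>x. ennreal ((f x)\<^sup>2)" 1 s] by simp
    finally show ?thesis .
  qed
  have "(\<integral>\<^sup>+x. ennreal (Q x) \<partial>lborel) = ennreal (1/h) * (\<integral>\<^sup>+x. (\<integral>\<^sup>+s. G x s \<partial>lborel) \<partial>lborel)"
    unfolding Qx by (rule nn_integral_cmult) (use Gm in measurable)
  also have "(\<integral>\<^sup>+x. (\<integral>\<^sup>+s. G x s \<partial>lborel) \<partial>lborel) = (\<integral>\<^sup>+s. (\<integral>\<^sup>+x. G x s \<partial>lborel) \<partial>lborel)"
    by (rule lborel_pair.Fubini'[symmetric]) (rule Gm)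
  also have "\<dots> = (\<integral>\<^sup>+s. F * indicator {0..h} s \<partial>lborel)"
    unfolding Gs by (intro nn_integral_cong) (simp add: mult.commute ennreal_indicator)
  also have "\<dots> = F * ennreal h"
    using h by (simp add: nn_integral_cmult_indicator)
  finally have QF: "(\<integral>\<^sup>+x. ennreal (Q x) \<partial>lborel) = F"
    using h by (simp add: ennreal_mult'[symmetric] mult.commute[of F] mult.assoc[symmetric])
  have am: "(\<lambda>x. (avg h f x)\<^sup>2) \<in> borel_measurable lborel"
    using avg_meas[OF fm, of h] by measurable
  have le: "(\<integral>\<^sup>+x. ennreal ((avg h f x)\<^sup>2) \<partial>lborel) \<le> F"
    unfolding QF[symmetric] by (intro nn_integral_mono) (simp add: pw ennreal_leI)
  have int: "integrable lborel (\<lambda>x. (avg h f x)\<^sup>2)"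
  proof (rule integrableI_bounded)
    show "(\<integral>\<^sup>+x. ennreal (norm ((avg h f x)\<^sup>2)) \<partial>lborel) < \<infinity>"
      using le F by (simp add: le_less_trans)
  qed (rule am)
  have "(LINT x|lborel. (avg h f x)\<^sup>2) = enn2real (\<integral>\<^sup>+x. ennreal ((avg h f x)\<^sup>2) \<partial>lborel)"
    by (rule integral_eq_nn_integral) (use am in auto)
  also have "\<dots> \<le> enn2real F"
    using le F by (intro enn2real_mono) auto
  also have "\<dots> = (LINT x|lborel. (f x)\<^sup>2)"
    using F by simp
  finally show ?thesis using int by simp
qed


lemma shift_sq_int:
  fixes f :: "real \<Rightarrow> real"
  assumes fi: "integrable lborel (\<lambda>x. (f x)\<^sup>2)"
  shows "integrable lborel (\<lambda>x. (f (x + h))\<^sup>2)"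
  using lborel_integrable_real_affine[OF fi, of 1 h] by (simp add: add.commute)

lemma shift_sq_integral:
  fixes f :: "real \<Rightarrow> real"
  shows "(LINT x|lborel. (f (x + h))\<^sup>2) = (LINT x|lborel. (f x)\<^sup>2)"
  using lborel_integral_real_affine[of 1 "\<lambda>x. (f x)\<^sup>2" h] by (simp add: add.commute)

lemma shift_set_integral:
  fixes f :: "real \<Rightarrow> real"
  shows "(LINT x:{a..b}|lborel. f (x + h)) = (LINT x:{a+h..b+h}|lborel. f x)"
proof -
  have "(LINT x:{a+h..b+h}|lborel. f x) = (LINT x|lborel. indicator {a+h..b+h} x * f x)"
    by (simp add: set_lebesgue_integral_def)
  also have "\<dots> = (LINT x|lborel. indicator {a+h..b+h} (h + 1 * x) * f (h + 1 * x))"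
    using lborel_integral_real_affine[of 1 "\<lambda>x. indicator {a+h..b+h} x * f x" h] by simp
  also have "\<dots> = (LINT x|lborel. indicator {a..b} x * f (x + h))"
    by (intro Bochner_Integration.integral_cong) (auto simp: indicator_def add.commute)
  finally show ?thesis by (simp add: set_lebesgue_integral_def)
qed

lemma Phi_Icc:
  fixes f :: "real \<Rightarrow> real"
  assumes li: "\<And>a b. set_integrable lborel {a..b} f" and cd: "c \<le> d"
  shows "(LINT t:{c..d}|lborel. f t) = (LBINT t=ereal 0..ereal d. f t) - (LBINT t=ereal 0..ereal c. f t)"
proof -
  have ii: "interval_lebesgue_integrable lborel (ereal u) (ereal v) f" for u v
  proof -
    have sub: "{p<..<q} \<subseteq> {p..q}" for p q :: real by auto
    show ?thesis
  proof (cases "u \<le> v")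
    case True
    then show ?thesis unfolding interval_lebesgue_integrable_def
      using set_integrable_subset[OF li[of u v] _ sub] by (simp add: einterval_iff)
  next
    case False
    then show ?thesis unfolding interval_lebesgue_integrable_def
      using set_integrable_subset[OF li[of v u] _ sub] by (simp add: einterval_iff)
  qed
  qed
  have "(LBINT t=ereal 0..ereal c. f t) + (LBINT t=ereal c..ereal d. f t) = (LBINT t=ereal 0..ereal d. f t)"
    by (rule interval_integral_sum) (metis ii min_def max_def)
  moreover have "(LBINT t=ereal c..ereal d. f t) = (LINT t:{c..d}|lborel. f t)"
    using cd by (intro interval_integral_Icc) 
  ultimately show ?thesis by simp
qed

lemma avg_ftc:
  fixes f :: "real \<Rightarrow> real"
  assumes fm[measurable]: "f \<in> borel_measurable borel" and fi: "integrable lborel (\<lambda>x. (f x)\<^sup>2)" and h: "h > 0"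
    and ab: "a \<le> b"
  shows "avg h f b - avg h f a = (LINT x:{a..b}|lborel. (f (x + h) - f x) / h)"
proof -
  have fml: "f \<in> borel_measurable lborel" by simp
  have li: "set_integrable lborel {a..b} f" for a b using sq_loc_int[OF fml fi] .
  have li': "set_integrable lborel {a..b} (\<lambda>x. f (x + h))" for a b
    by (rule sq_loc_int[OF _ shift_sq_int[OF fi]]) simp
  define P where "P y = (LBINT t=ereal 0..ereal y. f t)" for y
  have PI: "c \<le> d \<Longrightarrow> (LINT t:{c..d}|lborel. f t) = P d - P c" for c d
    unfolding P_def by (rule Phi_Icc[OF li])
  have "(LINT x:{a..b}|lborel. (f (x + h) - f x) / h) = ((LINT x:{a..b}|lborel. f (x + h)) - (LINT x:{a..b}|lborel. f x)) / h"
    by (simp only: set_integral_divide_zero set_integral_diff(2)[OF li' li])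
  also have "\<dots> = ((P (b+h) - P (a+h)) - (P b - P a)) / h"
    using ab by (simp only: shift_set_integral PI add_right_mono)
  also have "\<dots> = avg h f b - avg h f a"
  proof -
    have "avg h f y = (P (y+h) - P y) / h" for y
      unfolding avg_def using h by (simp only: PI)
    then show ?thesis by (simp add: diff_divide_distrib)
  qed
  finally show ?thesis ..
qed


lemma diffq_sq_int:
  fixes f :: "real \<Rightarrow> real"
  assumes fm[measurable]: "f \<in> borel_measurable borel" and fi: "integrable lborel (\<lambda>x. (f x)\<^sup>2)"
  shows "integrable lborel (\<lambda>x. ((f (x + h) - f x) / h)\<^sup>2)"
proof (rule Bochner_Integration.integrable_bound[where f="\<lambda>x. (2 * (f (x + h))\<^sup>2 + 2 * (f x)\<^sup>2) / h\<^sup>2"])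
  show "integrable lborel (\<lambda>x. (2 * (f (x + h))\<^sup>2 + 2 * (f x)\<^sup>2) / h\<^sup>2)"
    using shift_sq_int[OF fi, of h] fi
    by (intro integrable_divide_zero Bochner_Integration.integrable_add integrable_mult_right) auto
  show "(\<lambda>x. ((f (x + h) - f x) / h)\<^sup>2) \<in> borel_measurable lborel" by measurable
  have "(u - v)\<^sup>2 \<le> 2 * u\<^sup>2 + 2 * v\<^sup>2" for u v :: real
  proof -
    have "0 \<le> (u + v)\<^sup>2" by simp
    thus ?thesis by (simp add: power2_eq_square algebra_simps)
  qed
  then show "AE x in lborel. norm (((f (x + h) - f x) / h)\<^sup>2) \<le> norm ((2 * (f (x + h))\<^sup>2 + 2 * (f x)\<^sup>2) / h\<^sup>2)"
    by (auto simp: power_divide intro!: divide_right_mono)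
qed

lemma H1_avg:
  fixes f :: "real \<Rightarrow> real"
  assumes fm[measurable]: "f \<in> borel_measurable borel" and fi: "integrable lborel (\<lambda>x. (f x)\<^sup>2)" and h: "h > 0"
  shows "H1 (avg h f) (\<lambda>x. (f (x + h) - f x) / h)"
  unfolding H1_def
proof (intro conjI allI impI)
  show "avg h f \<in> borel_measurable lborel" using avg_meas[OF fm, of h] by simp
  show dm: "(\<lambda>x. (f (x + h) - f x) / h) \<in> borel_measurable lborel" by measurable
  show "integrable lborel (\<lambda>x. (avg h f x)\<^sup>2)" using avg_L2[OF fm fi h] by simp
  show di: "integrable lborel (\<lambda>x. ((f (x + h) - f x) / h)\<^sup>2)" by (rule diffq_sq_int[OF fm fi])
  fix a b :: real assume ab: "a \<le> b"
  show "set_integrable lborel {a..b} (\<lambda>x. (f (x + h) - f x) / h)"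
    by (rule sq_loc_int[OF dm di])
  show "avg h f b - avg h f a = (LINT t:{a..b}|lborel. (f (t + h) - f t) / h)"
    by (rule avg_ftc[OF fm fi h ab])
qed


lemma H1_loc: "H1 psi dpsi \<Longrightarrow> set_integrable lborel {a..b} dpsi"
  unfolding H1_def using sq_loc_int by blast

lemma H1_ftc: "H1 psi dpsi \<Longrightarrow> a \<le> b \<Longrightarrow> psi b - psi a = (LINT t:{a..b}|lborel. dpsi t)"
  unfolding H1_def by blast

lemma sq_set_le:
  fixes f :: "real \<Rightarrow> real"
  assumes fi: "integrable lborel (\<lambda>x. (f x)\<^sup>2)"
  shows "(LINT t:{a..b}|lborel. (f t)\<^sup>2) \<le> (LINT t|lborel. (f t)\<^sup>2)"
proof -
  have "integrable lborel (\<lambda>t. indicator {a..b} t *\<^sub>R (f t)\<^sup>2)"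
    using fi by (intro integrable_mult_indicator) auto
  then show ?thesis unfolding set_lebesgue_integral_def
    using fi by (intro integral_mono) (auto simp: indicator_def)
qed


lemma set_abs_bound:
  fixes f g :: "real \<Rightarrow> real"
  assumes "set_integrable lborel A f" "set_integrable lborel A g" "\<And>t. t \<in> A \<Longrightarrow> \<bar>f t\<bar> \<le> g t"
  shows "\<bar>LINT t:A|lborel. f t\<bar> \<le> (LINT t:A|lborel. g t)"
  using assms unfolding set_lebesgue_integral_def set_integrable_def
  by (intro integral_abs_bound_integral) (auto simp: indicator_def)

lemma abs_eps: assumes e: "(e::real) > 0" shows "\<bar>y\<bar> \<le> y\<^sup>2 / (2*e) + e / 2"
proof -
  have "0 \<le> (\<bar>y\<bar> - e)\<^sup>2" by simp
  hence "2*e*\<bar>y\<bar> \<le> \<bar>y\<bar>\<^sup>2 + e\<^sup>2" by (simp add: power2_eq_square algebra_simps)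
  hence "2*e*\<bar>y\<bar> \<le> y\<^sup>2 + e\<^sup>2" by simp
  hence "\<bar>y\<bar> \<le> (y\<^sup>2 + e\<^sup>2) / (2*e)" using e by (simp add: field_simps)
  also have "\<dots> = y\<^sup>2 / (2*e) + e / 2" using e by (simp add: field_simps power2_eq_square)
  finally show ?thesis .
qed

lemma H1_modulus:
  assumes H: "H1 psi dpsi" and e: "e > 0" and xt: "x \<le> t"
  shows "\<bar>psi t - psi x\<bar> \<le> (LINT s|lborel. (dpsi s)\<^sup>2) / (2*e) + e * (t - x) / 2"
proof -
  have dm: "dpsi \<in> borel_measurable lborel" and di: "integrable lborel (\<lambda>s. (dpsi s)\<^sup>2)"
    using H unfolding H1_def by auto
  have i1: "set_integrable lborel {x..t} dpsi" using H1_loc[OF H] .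
  have i2: "set_integrable lborel {x..t} (\<lambda>s. (dpsi s)\<^sup>2)"
    unfolding set_integrable_def using di by (intro integrable_mult_indicator) auto
  have i3: "set_integrable lborel {x..t} (\<lambda>s. e / 2)"
    unfolding set_integrable_def real_scaleR_def by (rule integrable_mult_left) (use xt in auto)
  have "\<bar>psi t - psi x\<bar> = \<bar>LINT s:{x..t}|lborel. dpsi s\<bar>" using H1_ftc[OF H xt] by simp
  also have "\<dots> \<le> (LINT s:{x..t}|lborel. (dpsi s)\<^sup>2 / (2*e) + e / 2)"
    by (rule set_abs_bound[OF i1]) (use i2 i3 abs_eps[OF e] in auto)
  also have "\<dots> = (LINT s:{x..t}|lborel. (dpsi s)\<^sup>2) / (2*e) + (LINT s:{x..t}|lborel. e / 2)"
    using i2 i3 by (simp add: set_integral_add(2))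
  also have "(LINT s:{x..t}|lborel. e / 2) = e * (t - x) / 2"
    using xt by (simp add: set_integral_const)
  also have "(LINT s:{x..t}|lborel. (dpsi s)\<^sup>2) \<le> (LINT s|lborel. (dpsi s)\<^sup>2)"
    by (rule sq_set_le[OF di])
  finally show ?thesis using e by (simp add: divide_right_mono)
qed

lemma avg_close:
  assumes H: "H1 psi dpsi" and e: "e > 0" and h: "h > 0"
  shows "\<bar>avg h psi x - psi x\<bar> \<le> (LINT s|lborel. (dpsi s)\<^sup>2) / (2*e) + e * h / 2"
proof -
  define K where "K = (LINT s|lborel. (dpsi s)\<^sup>2)"
  have pm: "psi \<in> borel_measurable lborel" and pi: "integrable lborel (\<lambda>s. (psi s)\<^sup>2)"
    using H unfolding H1_def by auto
  have i1: "set_integrable lborel {x..x+h} psi" by (rule sq_loc_int[OF pm pi])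
  have i3: "set_integrable lborel {x..x+h} (\<lambda>s. c)" for c :: real
    unfolding set_integrable_def real_scaleR_def by (rule integrable_mult_left) (use h in auto)
  have ic: "(LINT s:{x..x+h}|lborel. psi x) = h * psi x" using h by (simp add: set_integral_const)
  have "avg h psi x - psi x = (LINT s:{x..x+h}|lborel. psi s - psi x) / h"
    unfolding avg_def set_integral_diff(2)[OF i1 i3] ic using h by (simp add: field_simps)
  moreover have "\<bar>LINT s:{x..x+h}|lborel. psi s - psi x\<bar> \<le> (LINT s:{x..x+h}|lborel. K / (2*e) + e * h / 2)"
  proof (rule set_abs_bound)
    show "set_integrable lborel {x..x+h} (\<lambda>s. psi s - psi x)" using i1 i3 by auto
    show "set_integrable lborel {x..x+h} (\<lambda>s. K / (2*e) + e * h / 2)" by (rule i3)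
    fix s assume s: "s \<in> {x..x+h}"
    have "\<bar>psi s - psi x\<bar> \<le> K / (2*e) + e * (s - x) / 2" unfolding K_def using H1_modulus[OF H e] s by auto
    also have "\<dots> \<le> K / (2*e) + e * h / 2" using s e by (auto intro: mult_left_mono)
    finally show "\<bar>psi s - psi x\<bar> \<le> K / (2*e) + e * h / 2" .
  qed
  moreover have "(LINT s:{x..x+h}|lborel. K / (2*e) + e * h / 2) = h * (K / (2*e) + e * h / 2)"
    using h by (simp add: set_integral_const)
  ultimately show ?thesis using h unfolding K_def[symmetric]
    by (simp add: abs_divide pos_divide_le_eq mult.commute)
qed


lemma weight_int:
  fixes w p :: "real \<Rightarrow> real"
  assumes wm: "w \<in> borel_measurable lborel" and wb: "\<And>x. \<bar>w x\<bar> \<le> B"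
    and pm: "p \<in> borel_measurable lborel" and pi: "integrable lborel (\<lambda>x. (p x)\<^sup>2)"
  shows "integrable lborel (\<lambda>x. w x * (p x)\<^sup>2)"
proof (rule Bochner_Integration.integrable_bound[where f="\<lambda>x. B * (p x)\<^sup>2"])
  show "integrable lborel (\<lambda>x. B * (p x)\<^sup>2)" using pi by simp
  show "(\<lambda>x. w x * (p x)\<^sup>2) \<in> borel_measurable lborel" using wm pm by measurable
  have B: "0 \<le> B" using wb[of 0] by simp
  show "AE x in lborel. norm (w x * (p x)\<^sup>2) \<le> norm (B * (p x)\<^sup>2)"
    using wb B by (auto simp: abs_mult intro!: mult_right_mono)
qed

lemma drho_props:
  fixes drho :: "real \<Rightarrow> real"
  assumes sm: "smooth_fun drho" and supp: "\<exists>R. \<forall>x. R < \<bar>x\<bar> \<longrightarrow> drho x = 0"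
  shows "continuous_on UNIV drho" "\<exists>B. \<forall>x. \<bar>drho x\<bar> \<le> B" "integrable lborel (\<lambda>x. \<bar>drho x\<bar>)"
    "drho \<in> borel_measurable lborel"
proof -
  have "drho differentiable (at x)" for x using sm unfolding smooth_fun_def
    by (metis funpow_0)
  then show c: "continuous_on UNIV drho"
    by (simp add: continuous_at_imp_continuous_on differentiable_imp_continuous_within)
  then show m: "drho \<in> borel_measurable lborel"
    by (simp add: borel_measurable_continuous_onI)
  obtain R where R: "\<And>x. R < \<bar>x\<bar> \<Longrightarrow> drho x = 0" using supp by blast
  have "compact (drho ` {-R..R})"
    by (rule compact_continuous_image) (use c in \<open>auto intro: continuous_on_subset\<close>)
  then obtain B where B: "B > 0" "\<And>y. y \<in> drho ` {-R..R} \<Longrightarrow> norm y \<le> B"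
    using compact_imp_bounded bounded_pos by metis
  have Bx: "\<bar>drho x\<bar> \<le> B" for x
  proof (cases "\<bar>x\<bar> \<le> R")
    case True
    then have "x \<in> {-R..R}" by auto
    then show ?thesis using B(2)[of "drho x"] by auto
  next
    case False then show ?thesis using R[of x] B(1) by auto
  qed
  then show "\<exists>B. \<forall>x. \<bar>drho x\<bar> \<le> B" by blast
  show "integrable lborel (\<lambda>x. \<bar>drho x\<bar>)"
  proof (rule Bochner_Integration.integrable_bound[where f="\<lambda>x. B * indicator {-R..R} x"])
    show "integrable lborel (\<lambda>x. B * indicator {-R..R} x)"
      by (intro integrable_mult_right integrable_real_indicator) (auto simp: emeasure_lborel_Icc_eq)
    show "(\<lambda>x. \<bar>drho x\<bar>) \<in> borel_measurable lborel" using m by measurable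
    show "AE x in lborel. norm \<bar>drho x\<bar> \<le> norm (B * indicator {-R..R} x)"
    proof (intro AE_I2)
      fix x show "norm \<bar>drho x\<bar> \<le> norm (B * indicator {-R..R} x)"
        using Bx[of x] R[of x] B(1) by (cases "\<bar>x\<bar> \<le> R") (auto simp: indicator_def)
    qed
  qed
qed

lemma pw_est:
  fixes w p q n :: real
  assumes "\<bar>q - p\<bar> \<le> n" "n \<le> 1" "0 \<le> n"
  shows "w * p\<^sup>2 - n * (\<bar>w\<bar> * (2 * p\<^sup>2 + 3)) \<le> w * q\<^sup>2"
proof -
  define t where "t = q - p"
  have q: "q = p + t" by (simp add: t_def)
  have t: "\<bar>t\<bar> \<le> n" using assms(1) by (simp add: t_def)
  have "\<bar>w * (2*p*t + t\<^sup>2)\<bar> \<le> \<bar>w\<bar> * (2*\<bar>p\<bar>*n + n\<^sup>2)"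
  proof -
    have "\<bar>2*p*t + t\<^sup>2\<bar> \<le> 2*\<bar>p\<bar>*\<bar>t\<bar> + \<bar>t\<bar>\<^sup>2" by (simp add: abs_mult power2_eq_square abs_triangle_ineq[THEN order_trans])
    also have "\<dots> \<le> 2*\<bar>p\<bar>*n + n\<^sup>2" using t by (intro add_mono mult_left_mono power_mono) auto
    finally show ?thesis by (simp add: abs_mult mult_left_mono)
  qed
  also have "\<dots> \<le> \<bar>w\<bar> * (n * (2 * p\<^sup>2 + 3))"
  proof (rule mult_left_mono)
    have "\<bar>p\<bar> \<le> p\<^sup>2 + 1" proof -
      have "0 \<le> (\<bar>p\<bar> - 1)\<^sup>2" by simp
      hence "0 \<le> \<bar>p\<bar>\<^sup>2 - 2*\<bar>p\<bar> + 1" by (simp add: power2_eq_square algebra_simps)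
      thus ?thesis by simp
    qed
    hence "2*\<bar>p\<bar>*n \<le> 2*(p\<^sup>2+1)*n" using assms(3) by (intro mult_right_mono) auto
    moreover have "n\<^sup>2 \<le> n" using assms(2,3) by (simp add: power2_eq_square mult_left_le_one_le)
    ultimately show "2*\<bar>p\<bar>*n + n\<^sup>2 \<le> n * (2 * p\<^sup>2 + 3)" by (simp add: algebra_simps)
  qed simp
  finally have "\<bar>w * (2*p*t + t\<^sup>2)\<bar> \<le> n * (\<bar>w\<bar> * (2 * p\<^sup>2 + 3))" by (simp add: algebra_simps)
  moreover have "w * q\<^sup>2 = w * p\<^sup>2 + w * (2*p*t + t\<^sup>2)" unfolding q by (simp add: power2_eq_square algebra_simps)
  ultimately show ?thesis by linarith
qed

lemma vert_witness:
  fixes g M :: real and drho psi dpsi :: "real \<Rightarrow> real"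
  assumes g: "g > 0" and dm: "drho \<in> borel_measurable lborel" and dB: "\<And>x. \<bar>drho x\<bar> \<le> B"
    and dI: "integrable lborel (\<lambda>x. \<bar>drho x\<bar>)"
    and H: "H1 psi dpsi"
    and pos: "M\<^sup>2 * (LINT x|lborel. (dpsi x)\<^sup>2) < (LINT x|lborel. g * drho x * (psi x)\<^sup>2)"
  shows "\<exists>p d dd. H2 p d dd \<and> (LINT x|lborel. g * drho x * (p x)\<^sup>2 - M\<^sup>2 * (d x)\<^sup>2) > 0"
proof -
  have pm: "psi \<in> borel_measurable lborel" and pi: "integrable lborel (\<lambda>x. (psi x)\<^sup>2)"
    and dpm: "dpsi \<in> borel_measurable lborel" and dpi: "integrable lborel (\<lambda>x. (dpsi x)\<^sup>2)"
    using H unfolding H1_def by auto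
  have pmb[measurable]: "psi \<in> borel_measurable borel" using pm by simp
  have dpmb[measurable]: "dpsi \<in> borel_measurable borel" using dpm by simp
  have dmb[measurable]: "drho \<in> borel_measurable borel" using dm by simp
  define K where "K = (LINT x|lborel. (dpsi x)\<^sup>2)"
  define Gp where "Gp = (LINT x|lborel. g * drho x * (psi x)\<^sup>2)"
  define D where "D = Gp - M\<^sup>2 * K"
  have D: "D > 0" using pos unfolding D_def K_def Gp_def by simp
  have K0: "K \<ge> 0" unfolding K_def by simp
  have gB: "\<And>x. \<bar>g * drho x\<bar> \<le> g * B" using dB g by (simp add: abs_mult)
  have Cint: "integrable lborel (\<lambda>x. \<bar>drho x\<bar> * (2 * (psi x)\<^sup>2 + 3))"
  proof -
    have "integrable lborel (\<lambda>x. \<bar>drho x\<bar> * (psi x)\<^sup>2)"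
      by (rule weight_int[OF _ _ pm pi, of _ B]) (use dm dB in auto)
    then have "integrable lborel (\<lambda>x. 2 * (\<bar>drho x\<bar> * (psi x)\<^sup>2) + 3 * \<bar>drho x\<bar>)"
      using dI by auto
    then show ?thesis by (simp add: algebra_simps)
  qed
  define C where "C = (LINT x|lborel. \<bar>drho x\<bar> * (2 * (psi x)\<^sup>2 + 3))"
  have C0: "C \<ge> 0" unfolding C_def by (intro integral_nonneg_AE) auto
  define n where "n = min 1 (D / (g * C + 1))"
  have n0: "n > 0"
  proof -
    have "0 < g * C + 1" using g C0 by (simp add: add_nonneg_pos)
    then show ?thesis using D unfolding n_def by simp
  qed
  have n1: "n \<le> 1" unfolding n_def by auto
  have nC: "g * n * C < D"
  proof -
    have gC: "0 \<le> g * C" using g C0 by simp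
    have "n \<le> D / (g * C + 1)" unfolding n_def by simp
    then have "n * (g * C) \<le> (D / (g * C + 1)) * (g * C)"
      using gC by (rule mult_right_mono)
    then have "g * n * C \<le> (D / (g * C + 1)) * (g * C)" by (simp add: ac_simps)
    also have "\<dots> < D" using D gC by (simp add: field_simps)
    finally show ?thesis .
  qed
  define e where "e = (K + 1) / n"
  define h where "h = n / e"
  have e0: "e > 0" unfolding e_def using K0 n0 by simp
  have h0: "h > 0" unfolding h_def using e0 n0 by simp
  have eta: "K / (2*e) + e * h / 2 \<le> n"
  proof -
    have "K / (2*e) = K * n / (2 * (K + 1))" unfolding e_def using n0 K0 by (simp add: field_simps)
    also have "\<dots> \<le> n / 2" using n0 K0 by (simp add: field_simps)
    finally show ?thesis unfolding h_def using e0 by simp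
  qed
  define a where "a = avg h psi"
  define d where "d = (\<lambda>x. (psi (x + h) - psi x) / h)"
  define dd where "dd = (\<lambda>x. (dpsi (x + h) - dpsi x) / h)"
  have d_eq: "avg h dpsi = d"
  proof
    fix x show "avg h dpsi x = d x"
      unfolding avg_def d_def using H1_ftc[OF H, of x "x+h"] h0 by simp
  qed
  have H2: "H2 a d dd" unfolding H2_def a_def dd_def
    using H1_avg[OF pmb pi h0] H1_avg[OF dpmb dpi h0] d_eq d_def by simp
  have dK: "(LINT x|lborel. (d x)\<^sup>2) \<le> K" unfolding K_def using avg_L2[OF dpmb dpi h0] d_eq by simp
  have ai: "integrable lborel (\<lambda>x. (a x)\<^sup>2)" unfolding a_def using avg_L2[OF pmb pi h0] by simp
  have am: "a \<in> borel_measurable lborel" unfolding a_def using avg_meas[OF pmb, of h] by simp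
  have di: "integrable lborel (\<lambda>x. (d x)\<^sup>2)" unfolding d_def by (rule diffq_sq_int[OF pmb pi])
  have ga: "integrable lborel (\<lambda>x. g * drho x * (a x)\<^sup>2)"
    by (rule weight_int[OF _ gB am ai]) (use dm in measurable)
  have gp: "integrable lborel (\<lambda>x. g * drho x * (psi x)\<^sup>2)"
    by (rule weight_int[OF _ gB pm pi]) (use dm in measurable)
  have close: "\<bar>a x - psi x\<bar> \<le> n" for x
    using avg_close[OF H e0 h0, of x] eta unfolding a_def K_def by linarith
  have "Gp - g * n * C = (LINT x|lborel. g * drho x * (psi x)\<^sup>2 - (g * n) * (\<bar>drho x\<bar> * (2 * (psi x)\<^sup>2 + 3)))"
    unfolding Gp_def C_def using gp Cint by simp
  also have "\<dots> \<le> (LINT x|lborel. g * drho x * (a x)\<^sup>2)"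
  proof (rule integral_mono)
    show "integrable lborel (\<lambda>x. g * drho x * (psi x)\<^sup>2 - (g * n) * (\<bar>drho x\<bar> * (2 * (psi x)\<^sup>2 + 3)))"
      using gp Cint by auto
    show "integrable lborel (\<lambda>x. g * drho x * (a x)\<^sup>2)" by (rule ga)
    fix x
    have "drho x * (psi x)\<^sup>2 - n * (\<bar>drho x\<bar> * (2 * (psi x)\<^sup>2 + 3)) \<le> drho x * (a x)\<^sup>2"
      by (rule pw_est[OF close n1]) (use n0 in simp)
    then have "g * (drho x * (psi x)\<^sup>2 - n * (\<bar>drho x\<bar> * (2 * (psi x)\<^sup>2 + 3))) \<le> g * (drho x * (a x)\<^sup>2)"
      using g by (intro mult_left_mono) auto
    then show "g * drho x * (psi x)\<^sup>2 - (g * n) * (\<bar>drho x\<bar> * (2 * (psi x)\<^sup>2 + 3)) \<le> g * drho x * (a x)\<^sup>2"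
      by (simp add: algebra_simps)
  qed
  finally have A: "Gp - g * n * C \<le> (LINT x|lborel. g * drho x * (a x)\<^sup>2)" .
  have "(LINT x|lborel. g * drho x * (a x)\<^sup>2 - M\<^sup>2 * (d x)\<^sup>2) = (LINT x|lborel. g * drho x * (a x)\<^sup>2) - M\<^sup>2 * (LINT x|lborel. (d x)\<^sup>2)"
    using ga di by simp
  also have "\<dots> \<ge> Gp - g * n * C - M\<^sup>2 * K"
    using A dK by (smt (verit) mult_left_mono zero_le_power2)
  finally have "(LINT x|lborel. g * drho x * (a x)\<^sup>2 - M\<^sup>2 * (d x)\<^sup>2) > 0"
    using nC unfolding D_def by linarith
  then show ?thesis using H2 by blast
qed


lemma ind_avg:
  fixes c d x :: real
  assumes d: "d > 0"
  shows "avg d (indicator {c..c+d}) x = measure lborel {max x c..min (x+d) (c+d)} / d"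
proof -
  have "(LINT t:{x..x+d}|lborel. indicator {c..c+d} t) = (LINT t|lborel. indicator ({x..x+d} \<inter> {c..c+d}) t :: real)"
    unfolding set_lebesgue_integral_def
    by (intro Bochner_Integration.integral_cong) (auto simp: indicator_def)
  also have "\<dots> = measure lborel ({x..x+d} \<inter> {c..c+d})"
    by (subst Bochner_Integration.integral_indicator) auto
  also have "\<dots> = measure lborel {max x c..min (x+d) (c+d)}"
    by (simp only: Int_atLeastAtMost sup_real_def inf_real_def)
  finally show ?thesis unfolding avg_def by simp
qed

lemma hor_witness:
  fixes drho :: "real \<Rightarrow> real"
  assumes cont: "continuous_on UNIV drho" and dm: "drho \<in> borel_measurable lborel"
    and dB: "\<And>x. \<bar>drho x\<bar> \<le> B" and x0: "drho x0 > 0"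
  shows "\<exists>p dp. H1 p dp \<and> (LINT x|lborel. drho x * (p x)\<^sup>2) > 0"
proof -
  define d0 where "d0 = drho x0"
  obtain r where r: "r > 0" "\<And>x. dist x x0 < r \<Longrightarrow> dist (drho x) (drho x0) < d0 / 2"
    using cont x0 unfolding continuous_on_iff d0_def by (metis UNIV_I half_gt_zero)
  define d where "d = r / 2"
  have d: "d > 0" using r by (simp add: d_def)
  have pos: "drho x > d0 / 2" if "\<bar>x - x0\<bar> < 2 * d" for x
  proof -
    have "\<bar>drho x - drho x0\<bar> < d0 / 2"
      using r(2)[of x] that unfolding d_def d0_def dist_real_def by auto
    then show ?thesis unfolding d0_def by linarith
  qed
  define c where "c = x0 - d / 2"
  define f where "f = (indicator {c..c+d} :: real \<Rightarrow> real)"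
  define p where "p = avg d f"
  have fm[measurable]: "f \<in> borel_measurable borel" unfolding f_def by simp
  have fi: "integrable lborel (\<lambda>x. (f x)\<^sup>2)"
  proof -
    have "(\<lambda>x. (f x)\<^sup>2) = f" unfolding f_def by (auto simp: indicator_def)
    then show ?thesis unfolding f_def using d by (simp add: integrable_real_indicator)
  qed
  have H: "H1 p (\<lambda>x. (f (x + d) - f x) / d)" unfolding p_def by (rule H1_avg[OF fm fi d])
  have pm: "p \<in> borel_measurable lborel" unfolding p_def using avg_meas[OF fm, of d] by simp
  have pi: "integrable lborel (\<lambda>x. (p x)\<^sup>2)" unfolding p_def using avg_L2[OF fm fi d] by simp
  have pe: "p x = measure lborel {max x c..min (x+d) (c+d)} / d" for x
    unfolding p_def f_def by (rule ind_avg[OF d])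
  have nonneg: "0 \<le> drho x * (p x)\<^sup>2" for x
  proof (cases "\<bar>x - x0\<bar> < 2 * d")
    case True then show ?thesis using pos[OF True] d0_def x0 by simp
  next
    case False
    then have "min (x+d) (c+d) < max x c" unfolding c_def using d by auto
    then have "p x = 0" unfolding pe by simp
    then show ?thesis by simp
  qed
  have low: "d0 / 8 * indicator {c - d/2..c + d/2} x \<le> drho x * (p x)\<^sup>2" for x
  proof (cases "x \<in> {c - d/2..c + d/2}")
    case True
    have le: "max x c + d / 2 \<le> min (x+d) (c+d)" using True d by auto
    then have "measure lborel {max x c..min (x+d) (c+d)} = min (x+d) (c+d) - max x c"
      using d by (intro measure_lborel_Icc) linarith
    with le have "measure lborel {max x c..min (x+d) (c+d)} \<ge> d / 2" by linarith
    then have p2: "p x \<ge> 1/2" unfolding pe using d by (simp add: field_simps)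
    then have "(p x)\<^sup>2 \<ge> (1/2)\<^sup>2" by (intro power_mono) auto
    moreover have "drho x > d0 / 2" using True d unfolding c_def by (intro pos) auto
    moreover have "d0 > 0" using x0 d0_def by simp
    ultimately have "d0 / 2 * (1/2)\<^sup>2 \<le> drho x * (p x)\<^sup>2"
      by (intro mult_mono) auto
    then show ?thesis using True by (simp add: power2_eq_square)
  next
    case False then show ?thesis using nonneg[of x] by simp
  qed
  have "0 < d0 / 8 * d" using x0 d d0_def by simp
  also have "\<dots> = (LINT x|lborel. d0 / 8 * indicator {c - d/2..c + d/2} x)"
    using d by simp
  also have "\<dots> \<le> (LINT x|lborel. drho x * (p x)\<^sup>2)"
  proof (rule integral_mono)
    show "integrable lborel (\<lambda>x. d0 / 8 * indicator {c - d/2..c + d/2} x)"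
      using d by (intro integrable_mult_right integrable_real_indicator) auto
    show "integrable lborel (\<lambda>x. drho x * (p x)\<^sup>2)" by (rule weight_int[OF dm dB pm pi])
  qed (rule low)
  finally show ?thesis using H by blast
qed


lemma const_int_zero:
  fixes k :: real
  assumes "integrable lborel (\<lambda>_. k)"
  shows "k = 0"
proof (rule ccontr)
  assume k: "k \<noteq> 0"
  have "(\<integral>\<^sup>+x. ennreal (norm k) \<partial>lborel) < \<infinity>"
    using assms by (simp add: integrable_iff_bounded)
  moreover have "(\<integral>\<^sup>+x. ennreal (norm k) \<partial>lborel) = ennreal (norm k) * emeasure lborel UNIV"
    by (simp add: nn_integral_const)
  moreover have "ennreal (norm k) * emeasure lborel (UNIV :: real set) = \<infinity>"
    using k by (simp add: ennreal_mult_top)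
  ultimately show False by simp
qed

lemma H1_zero_deriv:
  assumes H: "H1 psi dpsi" and z: "(LINT x|lborel. (dpsi x)\<^sup>2) = 0"
  shows "psi = (\<lambda>_. 0)"
proof -
  have dm: "dpsi \<in> borel_measurable lborel" and di: "integrable lborel (\<lambda>x. (dpsi x)\<^sup>2)"
    and pi: "integrable lborel (\<lambda>x. (psi x)\<^sup>2)"
    using H unfolding H1_def by auto
  have "AE x in lborel. (dpsi x)\<^sup>2 = 0"
    using integral_nonneg_eq_0_iff_AE[OF di] z by simp
  then have ae: "AE x in lborel. dpsi x = 0" by simp
  have eq: "psi b = psi a" if "a \<le> b" for a b
  proof -
    have "(LINT t:{a..b}|lborel. dpsi t) = (LINT t:{a..b}|lborel. 0)"
      unfolding set_lebesgue_integral_def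
      by (rule integral_cong_AE) (use dm ae in auto)
    then show ?thesis using H1_ftc[OF H that] by simp
  qed
  have c: "psi x = psi 0" for x
  proof (cases "x \<le> 0")
    case True then show ?thesis using eq[of x 0] by simp
  next
    case False then show ?thesis using eq[of 0 x] by simp
  qed
  have eqf: "(\<lambda>x. (psi x)\<^sup>2) = (\<lambda>_::real. (psi 0)\<^sup>2)"
  proof
    fix x show "(psi x)\<^sup>2 = (psi 0)\<^sup>2" using c[of x] by (rule arg_cong)
  qed
  have "integrable lborel (\<lambda>_::real. (psi 0)\<^sup>2)" using pi unfolding eqf .
  then have z0: "(psi 0)\<^sup>2 = 0" by (rule const_int_zero)
  show ?thesis
  proof
    fix x show "psi x = 0" using c[of x] z0 by simp
  qed
qed


lemma gdr_eq: fixes g :: real and drho p :: "real \<Rightarrow> real" shows "(LINT x|lborel. g * drho x * (p x)\<^sup>2) = g * (LINT x|lborel. drho x * (p x)\<^sup>2)"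
  unfolding mult.assoc by (rule integral_mult_right_zero)

lemma E0_hor_eq:
  assumes H: "H1 psi dpsi" and dm: "drho \<in> borel_measurable lborel" and dB: "\<And>x. \<bar>drho x\<bar> \<le> B"
  shows "E0_hor g drho M xi psi dpsi = (M * fst xi)\<^sup>2 * (LINT x|lborel. (psi x)\<^sup>2)
     + (M * fst xi)\<^sup>2 / (norm xi)\<^sup>2 * (LINT x|lborel. (dpsi x)\<^sup>2) - g * (LINT x|lborel. drho x * (psi x)\<^sup>2)"
proof -
  have pm: "psi \<in> borel_measurable lborel" and pi: "integrable lborel (\<lambda>x. (psi x)\<^sup>2)"
    and di: "integrable lborel (\<lambda>x. (dpsi x)\<^sup>2)"
    using H unfolding H1_def by auto
  have wi: "integrable lborel (\<lambda>x. drho x * (psi x)\<^sup>2)" by (rule weight_int[OF dm dB pm pi])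
  have "E0_hor g drho M xi psi dpsi = (LINT x|lborel. (M * fst xi)\<^sup>2 * (psi x)\<^sup>2
     + (M * fst xi)\<^sup>2 / (norm xi)\<^sup>2 * (dpsi x)\<^sup>2 - g * (drho x * (psi x)\<^sup>2))"
    unfolding E0_hor_def by (intro Bochner_Integration.integral_cong) (auto simp: algebra_simps power_mult_distrib)
  then show ?thesis using pi di wi by simp
qed

lemma E0_ver_eq:
  assumes H: "H2 psi dpsi ddpsi" and dm: "drho \<in> borel_measurable lborel" and dB: "\<And>x. \<bar>drho x\<bar> \<le> B"
  shows "E0_ver g drho M xi psi dpsi ddpsi = M\<^sup>2 * (LINT x|lborel. (dpsi x)\<^sup>2)
     + M\<^sup>2 / (norm xi)\<^sup>2 * (LINT x|lborel. (ddpsi x)\<^sup>2) - g * (LINT x|lborel. drho x * (psi x)\<^sup>2)"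
proof -
  have pm: "psi \<in> borel_measurable lborel" and pi: "integrable lborel (\<lambda>x. (psi x)\<^sup>2)"
    and di: "integrable lborel (\<lambda>x. (dpsi x)\<^sup>2)" and ddi: "integrable lborel (\<lambda>x. (ddpsi x)\<^sup>2)"
    using H unfolding H2_def H1_def by auto
  have wi: "integrable lborel (\<lambda>x. drho x * (psi x)\<^sup>2)" by (rule weight_int[OF dm dB pm pi])
  have e: "E0_ver g drho M xi psi dpsi ddpsi = (LINT x|lborel. M\<^sup>2 * (dpsi x)\<^sup>2
     + M\<^sup>2 / (norm xi)\<^sup>2 * (ddpsi x)\<^sup>2 - g * (drho x * (psi x)\<^sup>2))"
    unfolding E0_ver_def by (intro Bochner_Integration.integral_cong) (auto simp: algebra_simps)
  show ?thesis unfolding e using pi di ddi wi by simp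
qed

lemma den_eq:
  assumes H: "H1 psi dpsi" and dm: "drho \<in> borel_measurable lborel" and dB: "\<And>x. \<bar>drho x\<bar> \<le> B"
  shows "(LINT x|lborel. g * drho x * (psi x)\<^sup>2 - M\<^sup>2 * (dpsi x)\<^sup>2)
     = g * (LINT x|lborel. drho x * (psi x)\<^sup>2) - M\<^sup>2 * (LINT x|lborel. (dpsi x)\<^sup>2)"
proof -
  have pm: "psi \<in> borel_measurable lborel" and pi: "integrable lborel (\<lambda>x. (psi x)\<^sup>2)"
    and di: "integrable lborel (\<lambda>x. (dpsi x)\<^sup>2)"
    using H unfolding H1_def by auto
  have wi: "integrable lborel (\<lambda>x. drho x * (psi x)\<^sup>2)" by (rule weight_int[OF dm dB pm pi])
  have e: "(LINT x|lborel. g * drho x * (psi x)\<^sup>2 - M\<^sup>2 * (dpsi x)\<^sup>2)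
    = (LINT x|lborel. g * (drho x * (psi x)\<^sup>2) - M\<^sup>2 * (dpsi x)\<^sup>2)"
    by (simp add: mult.assoc)
  show ?thesis unfolding e using pi di wi by simp
qed


lemma int_le_B:
  assumes H: "H1 psi dpsi" and dm: "drho \<in> borel_measurable lborel" and dB: "\<And>x. \<bar>drho x\<bar> \<le> B"
  shows "(LINT x|lborel. drho x * (psi x)\<^sup>2) \<le> B * (LINT x|lborel. (psi x)\<^sup>2)"
proof -
  have pm: "psi \<in> borel_measurable lborel" and pi: "integrable lborel (\<lambda>x. (psi x)\<^sup>2)"
    using H unfolding H1_def by auto
  have "(LINT x|lborel. drho x * (psi x)\<^sup>2) \<le> (LINT x|lborel. B * (psi x)\<^sup>2)"
  proof (rule integral_mono)
    show "integrable lborel (\<lambda>x. drho x * (psi x)\<^sup>2)" by (rule weight_int[OF dm dB pm pi])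
    show "integrable lborel (\<lambda>x. B * (psi x)\<^sup>2)" using pi by simp
    fix x show "drho x * (psi x)\<^sup>2 \<le> B * (psi x)\<^sup>2"
      using dB[of x] by (intro mult_right_mono) auto
  qed
  then show ?thesis by simp
qed

lemma psi0_int: "(LINT x|lborel. (f x) * ((\<lambda>_. 0::real) x)\<^sup>2) = 0" by simp

lemma hor_bdd:
  fixes g M :: real and xi :: "real \<times> real"
  assumes g: "g > 0" and dm: "drho \<in> borel_measurable lborel" and dB: "\<And>x. \<bar>drho x\<bar> \<le> B"
    and c: "(M * fst xi)\<^sup>2 > 0"
  shows "bdd_above ((\<lambda>(psi, dpsi).
      (g * (norm xi)\<^sup>2 * (LINT x|lborel. drho x * (psi x)\<^sup>2) / (M * fst xi)\<^sup>2
        - (LINT x|lborel. (dpsi x)\<^sup>2)) / (LINT x|lborel. (psi x)\<^sup>2))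
      ` {(psi, dpsi). H1 psi dpsi \<and> psi \<noteq> (\<lambda>_. 0)})"
proof -
  define U where "U = g * (norm xi)\<^sup>2 * B / (M * fst xi)\<^sup>2"
  have B0: "B \<ge> 0" using dB[of 0] by simp
  have U0: "U \<ge> 0" unfolding U_def using g B0 c by simp
  have "v \<le> U" if vin: "v \<in> (\<lambda>(psi, dpsi).
      (g * (norm xi)\<^sup>2 * (LINT x|lborel. drho x * (psi x)\<^sup>2) / (M * fst xi)\<^sup>2
        - (LINT x|lborel. (dpsi x)\<^sup>2)) / (LINT x|lborel. (psi x)\<^sup>2))
      ` {(psi, dpsi). H1 psi dpsi \<and> psi \<noteq> (\<lambda>_. 0)}" for v
  proof -
    obtain psi dpsi where H: "H1 psi dpsi" and v: "v = (g * (norm xi)\<^sup>2 * (LINT x|lborel. drho x * (psi x)\<^sup>2) / (M * fst xi)\<^sup>2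
        - (LINT x|lborel. (dpsi x)\<^sup>2)) / (LINT x|lborel. (psi x)\<^sup>2)"
    proof -
      from vin obtain q where q: "q \<in> {(psi, dpsi). H1 psi dpsi \<and> psi \<noteq> (\<lambda>_. 0)}"
        and vq: "v = (\<lambda>(psi, dpsi). (g * (norm xi)\<^sup>2 * (LINT x|lborel. drho x * (psi x)\<^sup>2) / (M * fst xi)\<^sup>2
        - (LINT x|lborel. (dpsi x)\<^sup>2)) / (LINT x|lborel. (psi x)\<^sup>2)) q"
        by (rule imageE)
      obtain a b where ab: "q = (a, b)" by (cases q)
      show ?thesis using that[of a b] q vq ab by simp
    qed
    define I1 where "I1 = (LINT x|lborel. drho x * (psi x)\<^sup>2)"
    define I2 where "I2 = (LINT x|lborel. (dpsi x)\<^sup>2)"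
    define I3 where "I3 = (LINT x|lborel. (psi x)\<^sup>2)"
    have I2: "I2 \<ge> 0" unfolding I2_def by simp
    have I3: "I3 \<ge> 0" unfolding I3_def by simp
    have I1: "I1 \<le> B * I3" unfolding I1_def I3_def by (rule int_le_B[OF H dm dB])
    show ?thesis
    proof (cases "I3 = 0")
      case True then show ?thesis using v U0 unfolding I3_def by simp
    next
      case False
      then have I3p: "I3 > 0" using I3 by simp
      have k: "g * (norm xi)\<^sup>2 / (M * fst xi)\<^sup>2 \<ge> 0" using g c by simp
      have "g * (norm xi)\<^sup>2 * I1 / (M * fst xi)\<^sup>2 - I2 \<le> g * (norm xi)\<^sup>2 / (M * fst xi)\<^sup>2 * (B * I3)"
        using mult_left_mono[OF I1 k] I2 by (simp add: field_simps)
      also have "\<dots> = U * I3" unfolding U_def by simp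
      finally have "(g * (norm xi)\<^sup>2 * I1 / (M * fst xi)\<^sup>2 - I2) / I3 \<le> U"
        using I3p by (simp add: pos_divide_le_eq)
      then show ?thesis using v unfolding I1_def I2_def I3_def by simp
    qed
  qed
  then show ?thesis unfolding bdd_above_def by blast
qed


lemma img_pair: "v \<in> (\<lambda>(a, b). F a b) ` {(a, b). P a b} \<Longrightarrow> \<exists>a b. P a b \<and> v = F a b"
  by auto

lemma sqrt_lt_imp: assumes "(y::real) \<ge> 0" "y < sqrt s" shows "y\<^sup>2 < s"
proof -
  have "sqrt s > 0" using assms by linarith
  then have s: "s > 0" by (simp add: real_sqrt_gt_0_iff)
  have "y\<^sup>2 < (sqrt s)\<^sup>2" using assms by (intro power_strict_mono) auto
  then show ?thesis using s by simp
qed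

lemma sqrt_le_imp: assumes "(y::real) \<ge> 0" "sqrt s \<le> y" shows "s \<le> y\<^sup>2"
proof (cases "s \<le> 0")
  case True then show ?thesis by (smt (verit) zero_le_power2)
next
  case False
  then have "(sqrt s)\<^sup>2 \<le> y\<^sup>2" using assms by (intro power_mono) auto
  then show ?thesis using False by simp
qed

lemma hor_in:
  fixes g M :: real and xi :: "real \<times> real" and drho :: "real \<Rightarrow> real"
  assumes g: "g > 0" and cont: "continuous_on UNIV drho" and dm: "drho \<in> borel_measurable lborel"
    and dB: "\<And>x. \<bar>drho x\<bar> \<le> B" and x0: "drho x0 > 0"
    and M: "M \<noteq> 0" and xi: "xi \<noteq> 0" and xin: "xi \<in> Ag_hor g drho M"
  shows "\<exists>psi dpsi. H1 psi dpsi \<and> E0_hor g drho M xi psi dpsi < 0"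
proof -
  obtain p dp where Hp: "H1 p dp" and pp: "(LINT x|lborel. drho x * (p x)\<^sup>2) > 0"
    using hor_witness[OF cont dm dB x0] by blast
  show ?thesis
  proof (cases "fst xi = 0")
    case True
    then have "E0_hor g drho M xi p dp = - g * (LINT x|lborel. drho x * (p x)\<^sup>2)"
      using E0_hor_eq[OF Hp dm dB] by simp
    also have "\<dots> < 0" using g pp by simp
    finally show ?thesis using Hp by blast
  next
    case False
    define c where "c = (M * fst xi)\<^sup>2"
    define n2 where "n2 = (norm xi)\<^sup>2"
    have c: "c > 0" unfolding c_def using M False by simp
    have n2: "n2 > 0" unfolding n2_def using xi by simp
    define V where "V = (\<lambda>(psi, dpsi).
      (g * (norm xi)\<^sup>2 * (LINT x|lborel. drho x * (psi x)\<^sup>2) / (M * fst xi)\<^sup>2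
        - (LINT x|lborel. (dpsi x)\<^sup>2)) / (LINT x|lborel. (psi x)\<^sup>2))
      ` {(psi, dpsi). H1 psi dpsi \<and> psi \<noteq> (\<lambda>_. 0)}"
    have S: "S_hor g drho M xi = sqrt (Sup V)" unfolding S_hor_def V_def ..
    have bdd: "bdd_above V" unfolding V_def by (rule hor_bdd[OF g dm dB]) (use c c_def in simp)
    have pne: "p \<noteq> (\<lambda>_. 0)" using pp by auto
    have ne: "V \<noteq> {}" unfolding V_def using Hp pne by auto
    have "norm xi < S_hor g drho M xi" using xin False unfolding Ag_hor_def by auto
    then have "n2 < Sup V" unfolding S n2_def by (intro sqrt_lt_imp) auto
    then obtain v where vV: "v \<in> V" and v: "n2 < v" using less_cSup_iff[OF ne bdd] by blast
    then obtain psi dpsi where H: "H1 psi dpsi" and ve: "v = (g * (norm xi)\<^sup>2 * (LINT x|lborel. drho x * (psi x)\<^sup>2) / (M * fst xi)\<^sup>2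
        - (LINT x|lborel. (dpsi x)\<^sup>2)) / (LINT x|lborel. (psi x)\<^sup>2)"
      unfolding V_def by (auto dest!: img_pair)
    define I1 where "I1 = (LINT x|lborel. drho x * (psi x)\<^sup>2)"
    define I2 where "I2 = (LINT x|lborel. (dpsi x)\<^sup>2)"
    define I3 where "I3 = (LINT x|lborel. (psi x)\<^sup>2)"
    have ve': "v = (g * n2 * I1 / c - I2) / I3" unfolding ve I1_def I2_def I3_def n2_def c_def ..
    have I3: "I3 \<ge> 0" unfolding I3_def by simp
    have I3p: "I3 > 0"
    proof (rule ccontr)
      assume "\<not> I3 > 0" then have "I3 = 0" using I3 by simp
      then show False using v ve' n2 by simp
    qed
    have "n2 * I3 < g * n2 * I1 / c - I2" using v ve' I3p by (simp add: less_divide_eq)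
    then have "c * (n2 * I3) < c * (g * n2 * I1 / c - I2)" using c by simp
    then have "c * n2 * I3 < g * n2 * I1 - c * I2" using c by (simp add: algebra_simps)
    then have "(c * I3 + c / n2 * I2 - g * I1) * n2 < 0" using n2 by (simp add: algebra_simps)
    then have neg: "c * I3 + c / n2 * I2 - g * I1 < 0" using n2 by (simp add: mult_less_0_iff)
    have "E0_hor g drho M xi psi dpsi = c * I3 + c / n2 * I2 - g * I1"
      unfolding E0_hor_eq[OF H dm dB] I1_def I2_def I3_def c_def n2_def ..
    then have "E0_hor g drho M xi psi dpsi < 0" using neg by linarith
    then show ?thesis using H by blast
  qed
qed


lemma Mc_le_imp:
  assumes r: "r \<ge> 0" and le: "Mc g drho \<le> ereal r"
  shows "Mc_sq g drho \<le> ereal (r\<^sup>2)"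
proof (cases "Mc_sq g drho")
  case (real s)
  then have "sqrt s \<le> r" using le unfolding Mc_def by simp
  then show ?thesis using real sqrt_le_imp[OF r] by simp
next
  case PInf then show ?thesis using le unfolding Mc_def by simp
next
  case MInf then show ?thesis by simp
qed

lemma Mc_gt_imp:
  assumes y: "y \<ge> 0" and lt: "ereal y < Mc g drho"
  shows "ereal (y\<^sup>2) < Mc_sq g drho"
proof (cases "Mc_sq g drho")
  case (real s)
  then have "y < sqrt s" using lt unfolding Mc_def by simp
  then show ?thesis using real sqrt_lt_imp[OF y] by simp
next
  case PInf then show ?thesis by simp
next
  case MInf then show ?thesis using lt y unfolding Mc_def by simp
qed

lemma hor_out:
  fixes g M :: real and xi :: "real \<times> real" and drho :: "real \<Rightarrow> real"
  assumes g: "g > 0" and dm: "drho \<in> borel_measurable lborel"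
    and dB: "\<And>x. \<bar>drho x\<bar> \<le> B"
    and M: "M \<noteq> 0" and xi: "xi \<noteq> 0" and xout: "xi \<notin> Ag_hor g drho M"
    and H: "H1 psi dpsi"
  shows "(norm xi)\<^sup>2 * E0_hor g drho M xi psi dpsi \<ge> 0"
proof -
  have f: "fst xi \<noteq> 0" using xout xi unfolding Ag_hor_def by auto
  define c where "c = (M * fst xi)\<^sup>2"
  define n2 where "n2 = (norm xi)\<^sup>2"
  have c: "c > 0" unfolding c_def using M f by simp
  have n2: "n2 > 0" unfolding n2_def using xi by simp
  define I1 where "I1 = (LINT x|lborel. drho x * (psi x)\<^sup>2)"
  define I2 where "I2 = (LINT x|lborel. (dpsi x)\<^sup>2)"
  define I3 where "I3 = (LINT x|lborel. (psi x)\<^sup>2)"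
  have I2: "I2 \<ge> 0" unfolding I2_def by simp
  have I3: "I3 \<ge> 0" unfolding I3_def by simp
  have E: "E0_hor g drho M xi psi dpsi = c * I3 + c / n2 * I2 - g * I1"
    unfolding E0_hor_eq[OF H dm dB] I1_def I2_def I3_def c_def n2_def ..
  have goal: "c * I3 + c / n2 * I2 - g * I1 \<ge> 0"
  proof (cases "psi = (\<lambda>_. 0)")
    case True
    then have "I1 = 0" "I3 = 0" unfolding I1_def I3_def by simp_all
    then show ?thesis using c n2 I2 by simp
  next
    case pnz: False
    define r where "r = \<bar>M * fst xi\<bar> / norm xi"
    have r0: "r \<ge> 0" unfolding r_def by simp
    have rpos: "0 < \<bar>M * fst xi\<bar> / norm xi" using M f xi by simp
    have r2: "r\<^sup>2 = c / n2" unfolding r_def c_def n2_def by (simp add: power_divide)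
    have "\<not> ereal r < Mc g drho \<or> \<not> norm xi < S_hor g drho M xi"
      using xout f rpos unfolding Ag_hor_def r_def by auto
    then show ?thesis
    proof
      assume "\<not> ereal r < Mc g drho"
      then have m1: "Mc_sq g drho \<le> ereal (c / n2)" using Mc_le_imp[OF r0] r2 by (simp add: not_less)
      have m2: "ereal ((LINT x|lborel. g * drho x * (psi x)\<^sup>2) / I2) \<le> Mc_sq g drho"
        unfolding Mc_sq_def I2_def
        by (rule SUP_upper2[where i="(psi, dpsi)"]) (use H pnz in auto)
      have "ereal (g * I1 / I2) \<le> ereal (c / n2)" using order_trans[OF m2 m1] unfolding gdr_eq I1_def .
      then have q: "g * I1 / I2 \<le> c / n2" by simp
      have "I2 \<noteq> 0" using H1_zero_deriv[OF H] pnz unfolding I2_def by blast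
      then have "I2 > 0" using I2 by simp
      then have "g * I1 \<le> c / n2 * I2" using q by (simp add: divide_le_eq)
      moreover have "c * I3 \<ge> 0" using c I3 by simp
      ultimately show ?thesis by linarith
    next
      assume "\<not> norm xi < S_hor g drho M xi"
      define V where "V = (\<lambda>(psi, dpsi).
        (g * (norm xi)\<^sup>2 * (LINT x|lborel. drho x * (psi x)\<^sup>2) / (M * fst xi)\<^sup>2
          - (LINT x|lborel. (dpsi x)\<^sup>2)) / (LINT x|lborel. (psi x)\<^sup>2))
        ` {(psi, dpsi). H1 psi dpsi \<and> psi \<noteq> (\<lambda>_. 0)}"
      have S: "S_hor g drho M xi = sqrt (Sup V)" unfolding S_hor_def V_def ..
      have bdd: "bdd_above V" unfolding V_def by (rule hor_bdd[OF g dm dB]) (use c c_def in simp)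
      have vV: "(g * n2 * I1 / c - I2) / I3 \<in> V"
        unfolding V_def I1_def I2_def I3_def c_def n2_def using H pnz by force
      have "Sup V \<le> n2" using \<open>\<not> norm xi < S_hor g drho M xi\<close> unfolding S n2_def
        by (intro sqrt_le_imp) auto
      then have vle: "(g * n2 * I1 / c - I2) / I3 \<le> n2" using cSup_upper[OF vV bdd] by linarith
      show ?thesis
      proof (cases "I3 = 0")
        case True
        have pm: "psi \<in> borel_measurable lborel" and pi: "integrable lborel (\<lambda>x. (psi x)\<^sup>2)"
          using H unfolding H1_def by auto
        have "AE x in lborel. (psi x)\<^sup>2 = 0"
          using integral_nonneg_eq_0_iff_AE[OF pi] True unfolding I3_def by simp
        then have "AE x in lborel. drho x * (psi x)\<^sup>2 = 0" by auto
        then have "I1 = (LINT x|lborel. (\<lambda>x::real. 0::real) x)" unfolding I1_def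
          by (intro integral_cong_AE) (use dm pm in auto)
        then have "I1 = 0" by simp
        then show ?thesis using True c n2 I2 by simp
      next
        case False
        then have I3p: "I3 > 0" using I3 by simp
        have "g * n2 * I1 / c - I2 \<le> n2 * I3" using vle I3p by (simp add: divide_le_eq)
        then have "c * (g * n2 * I1 / c - I2) \<le> c * (n2 * I3)" using c by simp
        then have "g * n2 * I1 - c * I2 \<le> c * n2 * I3" using c by (simp add: algebra_simps)
        then have "0 \<le> (c * I3 + c / n2 * I2 - g * I1) * n2" using n2 by (simp add: algebra_simps)
        then show ?thesis using n2 by (simp add: zero_le_mult_iff)
      qed
    qed
  qed
  show ?thesis unfolding E using goal n2_def n2 by simp
qed


lemma img_trip: "v \<in> (\<lambda>(a, b, c). F a b c) ` A \<Longrightarrow> \<exists>a b c. (a, b, c) \<in> A \<and> v = F a b c"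
  by auto

lemma W_props:
  fixes g M :: real and drho :: "real \<Rightarrow> real"
  defines "W \<equiv> (\<lambda>(psi, dpsi, ddpsi).
      M\<^sup>2 * (LINT x|lborel. (ddpsi x)\<^sup>2) /
        (LINT x|lborel. g * drho x * (psi x)\<^sup>2 - M\<^sup>2 * (dpsi x)\<^sup>2)) ` Mvc g drho M"
  shows "xi_vc g drho M = sqrt (Inf W)" "\<And>w. w \<in> W \<Longrightarrow> w \<ge> 0" "bdd_below W"
proof -
  show "xi_vc g drho M = sqrt (Inf W)" unfolding xi_vc_def W_def ..
  show nn: "\<And>w. w \<in> W \<Longrightarrow> w \<ge> 0"
  proof -
    fix w assume "w \<in> W"
    then obtain a b c where abc: "(a, b, c) \<in> Mvc g drho M" and w: "w = M\<^sup>2 * (LINT x|lborel. (c x)\<^sup>2) /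
        (LINT x|lborel. g * drho x * (a x)\<^sup>2 - M\<^sup>2 * (b x)\<^sup>2)"
      unfolding W_def by (auto dest!: img_trip)
    have "(LINT x|lborel. g * drho x * (a x)\<^sup>2 - M\<^sup>2 * (b x)\<^sup>2) > 0" using abc unfolding Mvc_def by auto
    then show "w \<ge> 0" unfolding w by simp
  qed
  show "bdd_below W" unfolding bdd_below_def using nn by blast
qed

lemma ver_in:
  fixes g M :: real and xi :: "real \<times> real" and drho :: "real \<Rightarrow> real"
  assumes g: "g > 0" and dm: "drho \<in> borel_measurable lborel"
    and dB: "\<And>x. \<bar>drho x\<bar> \<le> B" and dI: "integrable lborel (\<lambda>x. \<bar>drho x\<bar>)"
    and M: "0 < \<bar>M\<bar>" and Mc: "ereal \<bar>M\<bar> < Mc g drho"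
    and xi: "xi \<noteq> 0" and xin: "xi \<in> Ag_ver g drho M"
  shows "\<exists>psi dpsi ddpsi. (psi, dpsi, ddpsi) \<in> Mvc g drho M \<and> E0_ver g drho M xi psi dpsi ddpsi < 0"
proof -
  define n2 where "n2 = (norm xi)\<^sup>2"
  have n2: "n2 > 0" unfolding n2_def using xi by simp
  have M2: "M\<^sup>2 > 0" using M by simp
  have "ereal (\<bar>M\<bar>\<^sup>2) < Mc_sq g drho" by (rule Mc_gt_imp) (use Mc in auto)
  then have "ereal (M\<^sup>2) < Mc_sq g drho" by simp
  then obtain q where qin: "q \<in> {(psi, dpsi). H1 psi dpsi \<and> psi \<noteq> (\<lambda>_. 0)}"
    and qv: "ereal (M\<^sup>2) < ereal ((LINT x|lborel. g * drho x * (fst q x)\<^sup>2) / (LINT x|lborel. (snd q x)\<^sup>2))"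
    unfolding Mc_sq_def less_SUP_iff by blast
  obtain psi dpsi where q: "q = (psi, dpsi)" by (cases q)
  have H: "H1 psi dpsi" using qin q by auto
  define I2 where "I2 = (LINT x|lborel. (dpsi x)\<^sup>2)"
  define GI where "GI = (LINT x|lborel. g * drho x * (psi x)\<^sup>2)"
  have qv': "M\<^sup>2 < GI / I2" using qv q unfolding GI_def I2_def by simp
  have I2: "I2 \<ge> 0" unfolding I2_def by simp
  have "I2 \<noteq> 0" using qv' M2 by (auto simp: not_less)
  then have "I2 > 0" using I2 by simp
  then have "M\<^sup>2 * I2 < GI" using qv' by (simp add: less_divide_eq)
  then obtain p d dd where Hp: "H2 p d dd" and pos: "(LINT x|lborel. g * drho x * (p x)\<^sup>2 - M\<^sup>2 * (d x)\<^sup>2) > 0"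
    using vert_witness[OF g dm dB dI H] unfolding GI_def I2_def by blast
  define W where "W = (\<lambda>(psi, dpsi, ddpsi).
      M\<^sup>2 * (LINT x|lborel. (ddpsi x)\<^sup>2) /
        (LINT x|lborel. g * drho x * (psi x)\<^sup>2 - M\<^sup>2 * (dpsi x)\<^sup>2)) ` Mvc g drho M"
  note WP = W_props[where g=g and M=M and drho=drho, folded W_def]
  have ne: "W \<noteq> {}" unfolding W_def using Hp pos unfolding Mvc_def by auto
  have "xi_vc g drho M < norm xi" using xin unfolding Ag_ver_def by simp
  then have "Inf W < n2" unfolding WP(1) n2_def
    by (metis norm_ge_zero not_less real_sqrt_le_mono real_sqrt_abs abs_norm_cancel power2_eq_square real_sqrt_mult_self)
  then obtain w where wW: "w \<in> W" and wl: "w < n2" using cInf_less_iff[OF ne WP(3)] by blast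
  then obtain a b c where abc: "(a, b, c) \<in> Mvc g drho M" and w: "w = M\<^sup>2 * (LINT x|lborel. (c x)\<^sup>2) /
        (LINT x|lborel. g * drho x * (a x)\<^sup>2 - M\<^sup>2 * (b x)\<^sup>2)"
    unfolding W_def by (auto dest!: img_trip)
  have H2: "H2 a b c" and Dp: "(LINT x|lborel. g * drho x * (a x)\<^sup>2 - M\<^sup>2 * (b x)\<^sup>2) > 0"
    using abc unfolding Mvc_def by auto
  define J where "J = (LINT x|lborel. (c x)\<^sup>2)"
  define Den where "Den = (LINT x|lborel. g * drho x * (a x)\<^sup>2 - M\<^sup>2 * (b x)\<^sup>2)"
  have Dp': "Den > 0" using Dp unfolding Den_def .
  have H1ab: "H1 a b" using H2 unfolding H2_def by simp
  have E: "E0_ver g drho M xi a b c = M\<^sup>2 / n2 * J - Den"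
    unfolding E0_ver_eq[OF H2 dm dB] Den_def den_eq[OF H1ab dm dB] J_def n2_def by simp
  have "M\<^sup>2 * J < n2 * Den" using wl w Dp' unfolding J_def Den_def by (simp add: divide_less_eq)
  then have "M\<^sup>2 / n2 * J < Den" using n2 by (simp add: field_simps)
  then have "E0_ver g drho M xi a b c < 0" unfolding E by simp
  then show ?thesis using abc by blast
qed


lemma ver_out:
  fixes g M :: real and xi :: "real \<times> real" and drho :: "real \<Rightarrow> real"
  assumes g: "g > 0" and dm: "drho \<in> borel_measurable lborel"
    and dB: "\<And>x. \<bar>drho x\<bar> \<le> B"
    and xi: "xi \<noteq> 0" and xout: "xi \<notin> Ag_ver g drho M" and H2: "H2 psi dpsi ddpsi"
  shows "(norm xi)\<^sup>2 * E0_ver g drho M xi psi dpsi ddpsi \<ge> 0"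
proof -
  define n2 where "n2 = (norm xi)\<^sup>2"
  have n2: "n2 > 0" unfolding n2_def using xi by simp
  define J where "J = (LINT x|lborel. (ddpsi x)\<^sup>2)"
  define Den where "Den = (LINT x|lborel. g * drho x * (psi x)\<^sup>2 - M\<^sup>2 * (dpsi x)\<^sup>2)"
  have J: "J \<ge> 0" unfolding J_def by simp
  have H1ab: "H1 psi dpsi" using H2 unfolding H2_def by simp
  have E: "E0_ver g drho M xi psi dpsi ddpsi = M\<^sup>2 / n2 * J - Den"
    unfolding E0_ver_eq[OF H2 dm dB] Den_def den_eq[OF H1ab dm dB] J_def n2_def by simp
  have goal: "M\<^sup>2 / n2 * J - Den \<ge> 0"
  proof (cases "Den > 0")
    case False
    have "M\<^sup>2 / n2 * J \<ge> 0" using n2 J by simp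
    then show ?thesis using False by simp
  next
    case True
    have mem: "(psi, dpsi, ddpsi) \<in> Mvc g drho M" using H2 True unfolding Mvc_def Den_def by simp
    define W where "W = (\<lambda>(psi, dpsi, ddpsi).
      M\<^sup>2 * (LINT x|lborel. (ddpsi x)\<^sup>2) /
        (LINT x|lborel. g * drho x * (psi x)\<^sup>2 - M\<^sup>2 * (dpsi x)\<^sup>2)) ` Mvc g drho M"
    note WP = W_props[where g=g and M=M and drho=drho, folded W_def]
    have wW: "M\<^sup>2 * J / Den \<in> W" unfolding W_def J_def Den_def using mem by force
    have ne: "W \<noteq> {}" using wW by auto
    have I0: "Inf W \<ge> 0" using WP(2) ne by (intro cInf_greatest) auto
    have "norm xi \<le> sqrt (Inf W)" using xout unfolding Ag_ver_def WP(1) by simp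
    then have "n2 \<le> (sqrt (Inf W))\<^sup>2" unfolding n2_def by (intro power_mono) auto
    then have "n2 \<le> Inf W" using I0 by simp
    also have "Inf W \<le> M\<^sup>2 * J / Den" by (rule cInf_lower[OF wW WP(3)])
    finally have "n2 * Den \<le> M\<^sup>2 * J" using True by (simp add: le_divide_eq)
    then have "Den \<le> M\<^sup>2 / n2 * J" using n2 by (simp add: field_simps)
    then show ?thesis by simp
  qed
  show ?thesis unfolding E using goal n2 n2_def by simp
qed


theorem proposition2p4:
  fixes g M :: real and rho drho :: "real \<Rightarrow> real" and xi :: "real \<times> real"
  assumes g_pos: "g > 0"
    and rho_deriv: "\<And>x. (rho has_real_derivative drho x) (at x)"
    and rho_bdd: "\<exists>C. \<forall>x. \<bar>rho x\<bar> \<le> C"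
    and drho_smooth: "smooth_fun drho"
    and drho_supp: "\<exists>R. \<forall>x. R < \<bar>x\<bar> \<longrightarrow> drho x = 0"
    and rho_inf: "0 < (INF x. rho x)"
    and drho_pos: "\<exists>x0. drho x0 > 0"
    and xi_nz: "xi \<noteq> 0"
  shows
   "(M \<noteq> 0 \<longrightarrow>
      (xi \<in> Ag_hor g drho M \<longrightarrow>
         (\<exists>psi dpsi. H1 psi dpsi \<and> E0_hor g drho M xi psi dpsi < 0)) \<and>
      (xi \<notin> Ag_hor g drho M \<longrightarrow>
         (\<forall>psi dpsi. H1 psi dpsi \<longrightarrow> (norm xi)\<^sup>2 * E0_hor g drho M xi psi dpsi \<ge> 0)))
    \<and>
    (0 < \<bar>M\<bar> \<and> ereal \<bar>M\<bar> < Mc g drho \<longrightarrow>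
      (xi \<in> Ag_ver g drho M \<longrightarrow>
         (\<exists>psi dpsi ddpsi. (psi, dpsi, ddpsi) \<in> Mvc g drho M \<and>
                           E0_ver g drho M xi psi dpsi ddpsi < 0)) \<and>
      (xi \<notin> Ag_ver g drho M \<longrightarrow>
         (\<forall>psi dpsi ddpsi. H2 psi dpsi ddpsi \<longrightarrow>
                           (norm xi)\<^sup>2 * E0_ver g drho M xi psi dpsi ddpsi \<ge> 0)))"
  proof -
  obtain B where dB: "\<And>x. \<bar>drho x\<bar> \<le> B" using drho_props(2)[OF drho_smooth drho_supp] by blast
  have cont: "continuous_on UNIV drho" using drho_props(1)[OF drho_smooth drho_supp] .
  have dI: "integrable lborel (\<lambda>x. \<bar>drho x\<bar>)" using drho_props(3)[OF drho_smooth drho_supp] .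
  have dm: "drho \<in> borel_measurable lborel" using drho_props(4)[OF drho_smooth drho_supp] .
  obtain x0 where x0: "drho x0 > 0" using drho_pos by blast
  show ?thesis
  proof (intro conjI impI allI)
    assume M: "M \<noteq> 0"
    { assume "xi \<in> Ag_hor g drho M"
      then show "\<exists>psi dpsi. H1 psi dpsi \<and> E0_hor g drho M xi psi dpsi < 0"
        by (rule hor_in[OF g_pos cont dm dB x0 M xi_nz]) }
    { fix psi dpsi assume "xi \<notin> Ag_hor g drho M" "H1 psi dpsi"
      then show "(norm xi)\<^sup>2 * E0_hor g drho M xi psi dpsi \<ge> 0"
        by (intro hor_out[OF g_pos dm dB M xi_nz]) }
  next
    assume MM: "0 < \<bar>M\<bar> \<and> ereal \<bar>M\<bar> < Mc g drho"
    { assume "xi \<in> Ag_ver g drho M"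
      then show "\<exists>psi dpsi ddpsi. (psi, dpsi, ddpsi) \<in> Mvc g drho M \<and> E0_ver g drho M xi psi dpsi ddpsi < 0"
        using MM by (intro ver_in[OF g_pos dm dB dI _ _ xi_nz]) auto }
    { fix psi dpsi ddpsi assume "xi \<notin> Ag_ver g drho M" "H2 psi dpsi ddpsi"
      then show "(norm xi)\<^sup>2 * E0_ver g drho M xi psi dpsi ddpsi \<ge> 0"
        by (intro ver_out[OF g_pos dm dB xi_nz]) }
  qed
qed

end
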